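(* Let $a=0$ (ReLU activation) and let $s>0$ be real. Define $$I_0(s,d)=2^{s/2}\sum_{n=1}^{d}\binom{d}{n}\frac{1}{2^{d}}\,\frac{\Gamma(n/2+s/2)}{\Gamma(n/2)}$$ ($\Gamma$ is Euler's Gamma function). Then for every $k\ge 0$, $$\mathbb{E}\big[\|x^{(k)}\|^s\big]=\|x^{(0)}\|^s\big(\sigma^s I_0(s,d)\big)^k .$$ Let $\bar{\sigma}_0(s,d):=I_0(s,d)^{-1/s}$ and assume $x^{(0)}\neq 0$. Then: (i) if $\sigma=\bar{\sigma}_0(s,d)$, then $\mathbb{E}\|x^{(k)}\|^s=\|x^{(0)}\|^s$ for every $k\ge1$, while for every $p>s$, $\mathbb{E}\|x^{(k)}\|^p\to\infty$ exponentially fast in $k$; (ii) if $\sigma<\bar{\sigma}_0(s,d)$, then $\mathbb{E}\|x^{(k)}\|^s\to 0$ exponentially fast in $k$; (iii) if $\sigma>\bar{\sigma}_0(s,d)$, then $\mathbb{E}\|x^{(k)}\|^s\to\infty$ exponentially fast in $k$.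
   Context: Fix an integer width $d\ge1$ and a parameter $a\in[0,1]$. The parametric ReLU $\phi_a:\mathbb{R}\to\mathbb{R}$ is $\phi_a(z)=z$ for $z>0$ and $\phi_a(z)=az$ for $z\le 0$; it is applied componentwise to vectors ($\phi_0$ is ReLU, $\phi_1$ is the identity). Given $\sigma>0$ and a deterministic input $x^{(0)}\in\mathbb{R}^d$, the layer outputs of the fully connected network with zero biases are $x^{(k+1)}=\phi_a(W^{(k+1)}x^{(k)})$, $k\ge0$, where all entries of all matrices $W^{(1)},W^{(2)},\dots\in\mathbb{R}^{d\times d}$ are i.i.d. $\mathcal{N}(0,\sigma^2)$. $\|\cdot\|$ denotes the Euclidean norm. *)

theory Defs
  imports "HOL-Probability.Probability"
begin

definition prelu :: "real \<Rightarrow> real \<Rightarrow> real" where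
  "prelu a z = (if z > 0 then z else a * z)"

text \<open>Layer outputs of the zero-bias fully connected network of width CARD('n).
  W k is the weight matrix applied to produce layer k+1 (i.e. W k = W^(k+1) of the paper).\<close>
fun layer_out :: "real \<Rightarrow> (nat \<Rightarrow> 'w \<Rightarrow> real^'n^'n) \<Rightarrow> real^'n \<Rightarrow> nat \<Rightarrow> 'w \<Rightarrow> real^'n" where
  "layer_out a W x0 0 \<omega> = x0"
| "layer_out a W x0 (Suc k) \<omega> = (\<chi> i. prelu a ((W k \<omega> *v layer_out a W x0 k \<omega>) $ i))"

definition I0 :: "real \<Rightarrow> nat \<Rightarrow> real" where
  "I0 s d = 2 powr (s/2) * (\<Sum>n=1..d. real (d choose n) * (1 / 2^d) *
              (Gamma (real n / 2 + s / 2) / Gamma (real n / 2)))"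

definition sigma_bar0 :: "real \<Rightarrow> nat \<Rightarrow> real" where
  "sigma_bar0 s d = I0 s d powr (-1 / s)"

end

theory Submission
  imports Defs
begin

definition gd :: "real \<Rightarrow> real \<Rightarrow> real" where
  "gd a t = indicator {0..} t * t powr (a - 1) / exp t / Gamma a"

lemma gd_nonneg: "a > 0 \<Longrightarrow> gd a t \<ge> 0"
  unfolding gd_def by (auto simp: indicator_def intro!: divide_nonneg_pos Gamma_real_pos)

lemma gd_measurable[measurable]: "gd a \<in> borel_measurable borel"
  unfolding gd_def by measurable

lemma gd_moment:
  assumes a: "a > 0" and c: "c \<ge> 0"
  shows "(\<integral>\<^sup>+w. ennreal (w powr c * gd a w) \<partial>lborel) = ennreal (Gamma (a + c) / Gamma a)"
proof -
  have "(\<integral>\<^sup>+w. ennreal (w powr c * gd a w) \<partial>lborel)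
     = (\<integral>\<^sup>+w. ennreal (indicator {0..} w * w powr (a + c - 1) / exp w) * ennreal (1 / Gamma a) \<partial>lborel)"
  proof (intro nn_integral_cong)
    fix w :: real
    show "ennreal (w powr c * gd a w) = ennreal (indicator {0..} w * w powr (a + c - 1) / exp w) * ennreal (1 / Gamma a)"
    proof (cases "w > 0")
      case True
      have "w powr c * w powr (a - 1) = w powr (c + (a - 1))" by (simp add: powr_add)
      also have "c + (a - 1) = a + c - 1" by simp
      finally have "w powr c * w powr (a - 1) = w powr (a + c - 1)" .
      then show ?thesis using True a
        by (subst ennreal_mult'[symmetric]) (auto simp: gd_def indicator_def Gamma_real_pos less_imp_le field_simps)
    next
      case False
      then show ?thesis by (cases "w = 0") (auto simp: gd_def indicator_def)
    qed
  qed
  also have "\<dots> = (\<integral>\<^sup>+w. ennreal (indicator {0..} w * w powr (a + c - 1) / exp w) \<partial>lborel) * ennreal (1 / Gamma a)"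
    by (rule nn_integral_multc) measurable
  also have "\<dots> = ennreal (Gamma (a + c)) * ennreal (1 / Gamma a)"
    using a c by (subst Gamma_conv_nn_integral_real) auto
  also have "\<dots> = ennreal (Gamma (a + c) / Gamma a)"
    using a c by (subst ennreal_mult'[symmetric]) (auto intro: Gamma_real_pos less_imp_le)
  finally show ?thesis .
qed

lemma gd_mass:
  assumes a: "a > 0"
  shows "(\<integral>\<^sup>+w. ennreal (gd a w) \<partial>lborel) = 1"
proof -
  have "(\<integral>\<^sup>+w. ennreal (gd a w) \<partial>lborel) = (\<integral>\<^sup>+w. ennreal (w powr 0 * gd a w) \<partial>lborel)"
    by (intro nn_integral_cong) (auto simp: gd_def indicator_def)
  also have "\<dots> = 1" using gd_moment[OF a, of 0] a Gamma_real_pos[OF a] by simp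
  finally show ?thesis .
qed

lemma beta_nn:
  assumes a: "a > 0" and b: "b > 0" and u: "u > 0"
  shows "(\<integral>\<^sup>+t. ennreal (indicator {0..u} t * t powr (a - 1) * (u - t) powr (b - 1)) \<partial>lborel)
         = ennreal (u powr (a + b - 1) * Beta a b)"
proof -
  have "(\<integral>\<^sup>+t. ennreal (indicator {0..u} t * t powr (a - 1) * (u - t) powr (b - 1)) \<partial>lborel) = 
          (\<integral>\<^sup>+t. ennreal (indicator {0..1} t * (u * t) powr (a - 1) * (u - u * t) powr (b - 1)) 
            \<partial>distr lborel borel ((*) (1 / u)))" (is "_ = nn_integral _ ?f")
    using u
    by (subst nn_integral_distr) (auto simp: indicator_def field_simps intro!: nn_integral_cong)
  also have "distr lborel borel ((*) (1 / u)) = density lborel (\<lambda>_. u)"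
    using u by (subst lborel_distr_mult) auto
  also have "nn_integral \<dots> ?f = (\<integral>\<^sup>+x. ennreal (indicator {0..1} x * (u * (u * x) powr (a - 1) *
                                          (u * (1 - x)) powr (b - 1))) \<partial>lborel)" using u
    by (subst nn_integral_density) (auto simp: ennreal_mult' [symmetric] algebra_simps)
  also have "\<dots> = (\<integral>\<^sup>+x. ennreal (u powr (a + b - 1)) * 
                        ennreal (indicator {0..1} x * x powr (a - 1) *
                                   (1 - x) powr (b - 1)) \<partial>lborel)" using u a b
    by (intro nn_integral_cong)
       (auto simp: indicator_def powr_mult powr_add powr_diff mult_ac ennreal_mult' [symmetric])
  also have "\<dots> = ennreal (u powr (a + b - 1)) * 
                    (\<integral>\<^sup>+x. ennreal (indicator {0..1} x * x powr (a - 1) *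
                                     (1 - x) powr (b - 1)) \<partial>lborel)"
    by (subst nn_integral_cmult) auto
  also have "(\<integral>\<^sup>+x. ennreal (indicator {0..1} x * x powr (a - 1) *
                     (1 - x) powr (b - 1)) \<partial>lborel) = ennreal (Beta a b)"
    using nn_integral_has_integral_lebesgue[OF _ has_integral_Beta_real[OF a b]]
    by (simp add: mult_ac)
  moreover have "Beta a b \<ge> 0" using Gamma_real_pos[OF a] Gamma_real_pos[OF b] Gamma_real_pos[of "a+b"] a b
    by (simp add: Beta_def)
  ultimately show ?thesis using u by (simp add: ennreal_mult [symmetric] mult_ac)
qed

lemma gd_conv_point:
  assumes a: "a > 0" and b: "b > 0"
  shows "(\<integral>\<^sup>+t. ennreal (gd b (w - t) * gd a t) \<partial>lborel) = ennreal (gd (a + b) w)"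
proof (cases "w > 0")
  case True
  have "(\<integral>\<^sup>+t. ennreal (gd b (w - t) * gd a t) \<partial>lborel)
      = (\<integral>\<^sup>+t. ennreal (indicator {0..w} t * t powr (a - 1) * (w - t) powr (b - 1)) *
                 ennreal (1 / exp w / (Gamma a * Gamma b)) \<partial>lborel)"
  proof (intro nn_integral_cong)
    fix t :: real
    have e: "exp (w - t) * exp t = exp w" by (simp add: exp_add[symmetric])
    show "ennreal (gd b (w - t) * gd a t) = ennreal (indicator {0..w} t * t powr (a - 1) * (w - t) powr (b - 1)) *
                 ennreal (1 / exp w / (Gamma a * Gamma b))"
      using a b Gamma_real_pos[OF a] Gamma_real_pos[OF b]
      by (subst ennreal_mult'[symmetric]) (auto simp: gd_def indicator_def e[symmetric] field_simps)
  qed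
  also have "\<dots> = ennreal (w powr (a + b - 1) * Beta a b) * ennreal (1 / exp w / (Gamma a * Gamma b))"
    by (subst nn_integral_multc) (auto simp: beta_nn[OF a b True])
  also have "\<dots> = ennreal (gd (a + b) w)"
    using a b True Gamma_real_pos[OF a] Gamma_real_pos[OF b] Gamma_real_pos[of "a+b"]
      less_imp_neq[OF Gamma_real_pos[OF a]] less_imp_neq[OF Gamma_real_pos[OF b]]
    by (subst ennreal_mult'[symmetric]) (auto simp: gd_def Beta_def field_simps)
  finally show ?thesis .
next
  case False
  have "ennreal (gd b (w - t) * gd a t) = 0" for t
      using False by (cases "t = 0") (auto simp: gd_def indicator_def)
  then have "(\<integral>\<^sup>+t. ennreal (gd b (w - t) * gd a t) \<partial>lborel) = 0" by simp
  then show ?thesis using False by (cases "w = 0") (auto simp: gd_def indicator_def)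
qed

lemma gd_conv:
  assumes a: "a > 0" and b: "b > 0" and F[measurable]: "F \<in> borel_measurable borel"
  shows "(\<integral>\<^sup>+t. (\<integral>\<^sup>+u. F (t + u) * ennreal (gd b u) \<partial>lborel) * ennreal (gd a t) \<partial>lborel)
       = (\<integral>\<^sup>+w. F w * ennreal (gd (a + b) w) \<partial>lborel)"
proof -
  have "(\<integral>\<^sup>+t. (\<integral>\<^sup>+u. F (t + u) * ennreal (gd b u) \<partial>lborel) * ennreal (gd a t) \<partial>lborel)
      = (\<integral>\<^sup>+t. (\<integral>\<^sup>+w. F w * ennreal (gd b (w - t) * gd a t) \<partial>lborel) \<partial>lborel)"
  proof (intro nn_integral_cong)
    fix t :: real
    have "(\<integral>\<^sup>+w. F w * ennreal (gd b (w - t) * gd a t) \<partial>lborel)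
        = (\<integral>\<^sup>+w. F w * ennreal (gd b (w - t) * gd a t) \<partial>distr lborel borel ((+) t))"
      by (simp add: lborel_distr_plus)
    also have "\<dots> = (\<integral>\<^sup>+u. F (t + u) * ennreal (gd b u * gd a t) \<partial>lborel)"
      by (subst nn_integral_distr) auto
    also have "\<dots> = (\<integral>\<^sup>+u. F (t + u) * ennreal (gd b u) * ennreal (gd a t) \<partial>lborel)"
      using a b by (intro nn_integral_cong) (simp add: ennreal_mult gd_nonneg mult.assoc)
    also have "\<dots> = (\<integral>\<^sup>+u. F (t + u) * ennreal (gd b u) \<partial>lborel) * ennreal (gd a t)"
      by (rule nn_integral_multc) measurable
    finally show "(\<integral>\<^sup>+u. F (t + u) * ennreal (gd b u) \<partial>lborel) * ennreal (gd a t)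
        = (\<integral>\<^sup>+w. F w * ennreal (gd b (w - t) * gd a t) \<partial>lborel)" by simp
  qed
  also have "\<dots> = (\<integral>\<^sup>+w. (\<integral>\<^sup>+t. F w * ennreal (gd b (w - t) * gd a t) \<partial>lborel) \<partial>lborel)"
    by (subst lborel_pair.Fubini') (auto simp: case_prod_unfold)
  also have "\<dots> = (\<integral>\<^sup>+w. F w * (\<integral>\<^sup>+t. ennreal (gd b (w - t) * gd a t) \<partial>lborel) \<partial>lborel)"
    by (intro nn_integral_cong nn_integral_cmult) measurable
  also have "\<dots> = (\<integral>\<^sup>+w. F w * ennreal (gd (a + b) w) \<partial>lborel)"
    by (simp add: gd_conv_point[OF a b])
  finally show ?thesis .
qed

lemma sup_ind:
  fixes c :: "nat \<Rightarrow> real" and f :: "real \<Rightarrow> ennreal"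
  assumes "\<And>y. \<exists>n. y \<le> c n"
  shows "(SUP n. f x * indicator {0..c n} x) = f x * indicator {0..} x"
proof (cases "x \<ge> 0")
  case True
  obtain n where n: "x \<le> c n" using assms by blast
  show ?thesis
  proof (rule antisym)
    show "(SUP n. f x * indicator {0..c n} x) \<le> f x * indicator {0..} x"
      by (rule SUP_least) (auto simp: indicator_def)
    show "f x * indicator {0..} x \<le> (SUP n. f x * indicator {0..c n} x)"
      by (rule SUP_upper2[of n]) (use True n in \<open>auto simp: indicator_def\<close>)
  qed
next
  case False
  then show ?thesis by (auto simp: indicator_def)
qed

lemma incseq_ind:
  fixes c :: "nat \<Rightarrow> real" and f :: "real \<Rightarrow> ennreal"
  assumes "mono c"
  shows "incseq (\<lambda>n x. f x * indicator {0..c n} x)"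
proof (rule incseq_SucI, rule le_funI)
  fix n x
  have "c n \<le> c (Suc n)" using assms by (simp add: mono_def)
  then have "(indicator {0..c n} x :: ennreal) \<le> indicator {0..c (Suc n)} x"
    by (simp add: indicator_def)
  then show "f x * indicator {0..c n} x \<le> f x * indicator {0..c (Suc n)} x"
    by (rule mult_left_mono) simp
qed

lemma phi_identity:
  assumes x: "x > 0"
  shows "gd (1/2) (x\<^sup>2 / 2) / 2 * x = std_normal_density x"
proof -
  have s2: "sqrt (x\<^sup>2 / 2) = x / sqrt 2" using x by (simp add: real_sqrt_divide)
  have "(x\<^sup>2 / 2) powr (1/2 - 1) = (x\<^sup>2 / 2) powr (- (1/2))" by simp
  also have "\<dots> = 1 / ((x\<^sup>2 / 2) powr (1/2))" by (rule powr_minus_divide)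
  also have "(x\<^sup>2 / 2) powr (1/2) = sqrt (x\<^sup>2 / 2)" by (rule powr_half_sqrt) simp
  finally have p: "(x\<^sup>2 / 2) powr (1/2 - 1) = sqrt 2 / x" using x by (simp add: s2)
  have g: "gd (1/2) (x\<^sup>2 / 2) = sqrt 2 / x / exp (x\<^sup>2 / 2) / sqrt pi"
    using x unfolding gd_def by (simp only: p Gamma_one_half_real) simp
  have "sqrt (2 * pi) = sqrt 2 * sqrt pi" by (simp add: real_sqrt_mult)
  then show ?thesis using x unfolding g std_normal_density_def
    by (simp add: exp_minus field_simps)
qed

lemma half_pos:
  assumes F[measurable]: "F \<in> borel_measurable borel"
  shows "(\<integral>\<^sup>+x. F (x\<^sup>2 / 2) * ennreal (std_normal_density x * indicator {0<..} x) \<partial>lborel)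
       = (\<integral>\<^sup>+w. F w * ennreal (gd (1/2) w / 2) \<partial>lborel)"
proof -
  define f where "f w = F w * ennreal (gd (1/2) w / 2)" for w
  define h where "h x = F (x\<^sup>2 / 2) * ennreal (std_normal_density x * indicator {0<..} x)" for x
  have [measurable]: "f \<in> borel_measurable borel" "h \<in> borel_measurable borel"
    unfolding f_def h_def by measurable
  have eqn: "(\<integral>\<^sup>+x. f x * indicator {0..(real (Suc n))\<^sup>2 / 2} x \<partial>lborel)
           = (\<integral>\<^sup>+x. h x * indicator {0..real (Suc n)} x \<partial>lborel)" for n
  proof -
    have deriv: "((\<lambda>x. x\<^sup>2 / 2) has_real_derivative x) (at x)" for x :: real
      by (auto intro!: derivative_eq_intros)
    have "(\<integral>\<^sup>+x. f x * indicator {(\<lambda>x. x\<^sup>2 / 2) 0..(\<lambda>x. x\<^sup>2 / 2) (real (Suc n))} x \<partial>lborel)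
        = (\<integral>\<^sup>+x. f ((\<lambda>x. x\<^sup>2 / 2) x) * (\<lambda>x. x) x * indicator {0..real (Suc n)} x \<partial>lborel)"
      by (rule nn_integral_substitution_aux[where g' = "\<lambda>x. x"])
         (auto intro!: deriv continuous_intros)
    also have "\<dots> = (\<integral>\<^sup>+x. h x * indicator {0..real (Suc n)} x \<partial>lborel)"
    proof (intro nn_integral_cong)
      fix x :: real
      show "f (x\<^sup>2 / 2) * ennreal x * indicator {0..real (Suc n)} x = h x * indicator {0..real (Suc n)} x"
      proof (cases "x > 0")
        case True
        have "f (x\<^sup>2 / 2) * ennreal x = F (x\<^sup>2 / 2) * ennreal (gd (1/2) (x\<^sup>2 / 2) / 2 * x)"
          unfolding f_def using True gd_nonneg[of "1/2" "x\<^sup>2/2"]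
          by (simp add: ennreal_mult[symmetric] mult.assoc)
        also have "\<dots> = h x" unfolding h_def using True phi_identity[OF True] by simp
        finally show ?thesis by simp
      next
        case False
        then show ?thesis by (cases "x = 0") (auto simp: h_def indicator_def)
      qed
    qed
    finally show ?thesis by simp
  qed
  have "(\<integral>\<^sup>+x. f x \<partial>lborel) = (\<integral>\<^sup>+x. f x * indicator {0..} x \<partial>lborel)"
    by (intro nn_integral_cong) (auto simp: f_def gd_def indicator_def)
  also have "\<dots> = (\<integral>\<^sup>+x. (SUP n. f x * indicator {0..(real (Suc n))\<^sup>2 / 2} x) \<partial>lborel)"
  proof (intro nn_integral_cong sup_ind[symmetric])
    fix y :: real
    obtain n :: nat where "y \<le> real n" using real_arch_simple by blast
    moreover have "real n \<le> (real (Suc n))\<^sup>2 / 2"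
      by (simp add: power2_eq_square field_simps)
    ultimately show "\<exists>n. y \<le> (real (Suc n))\<^sup>2 / 2" by (intro exI[of _ n]) simp
  qed
  also have "\<dots> = (SUP n. (\<integral>\<^sup>+x. f x * indicator {0..(real (Suc n))\<^sup>2 / 2} x \<partial>lborel))"
  proof (rule nn_integral_monotone_convergence_SUP[OF incseq_ind])
    show "mono (\<lambda>n. (real (Suc n))\<^sup>2 / 2)"
      by (auto simp: mono_def intro!: divide_right_mono power_mono)
  qed measurable
  also have "\<dots> = (SUP n. (\<integral>\<^sup>+x. h x * indicator {0..real (Suc n)} x \<partial>lborel))"
    using eqn by presburger
  also have "\<dots> = (\<integral>\<^sup>+x. (SUP n. h x * indicator {0..real (Suc n)} x) \<partial>lborel)"
    by (rule nn_integral_monotone_convergence_SUP[OF incseq_ind, symmetric])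
       (auto simp: mono_def)
  also have "\<dots> = (\<integral>\<^sup>+x. h x * indicator {0..} x \<partial>lborel)"
  proof (intro nn_integral_cong sup_ind)
    fix y :: real
    obtain n :: nat where "y \<le> real n" using real_arch_simple by blast
    then show "\<exists>n. y \<le> real (Suc n)" by (intro exI[of _ n]) simp
  qed
  also have "\<dots> = (\<integral>\<^sup>+x. h x \<partial>lborel)"
    by (intro nn_integral_cong) (auto simp: h_def indicator_def)
  finally show ?thesis unfolding f_def h_def by simp
qed

lemma two_inv: "2 * inverse 2 = (1::ennreal)"
proof -
  have "(2::ennreal) * inverse 2 = ennreal 2 * inverse (ennreal 2)" by simp
  also have "\<dots> = ennreal 2 * ennreal (inverse 2)" by (subst inverse_ennreal) auto
  also have "\<dots> = 1" by (subst ennreal_mult[symmetric]) auto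
  finally show ?thesis .
qed

lemma two_inv': "inverse 2 + inverse 2 = (1::ennreal)"
  using two_inv by (simp add: mult_2[symmetric])

lemma half_e: "0 \<le> x \<Longrightarrow> ennreal (x / 2) = ennreal x * ennreal (1/2)"
  by (subst ennreal_mult[symmetric]) auto

lemma std_normal_mass: "(\<integral>\<^sup>+x. ennreal (std_normal_density x) \<partial>lborel) = 1"
  by (subst nn_integral_eq_integral) (auto simp: normal_density_nonneg)

lemma half_mass_neg: "(\<integral>\<^sup>+x. ennreal (std_normal_density x * indicator {..0} x) \<partial>lborel) = ennreal (1/2)"
proof -
  have pos: "(\<integral>\<^sup>+x. ennreal (std_normal_density x * indicator {0<..} x) \<partial>lborel) = ennreal (1/2)"
  proof -
    have "(\<integral>\<^sup>+x. ennreal (std_normal_density x * indicator {0<..} x) \<partial>lborel)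
        = (\<integral>\<^sup>+x. (\<lambda>_. 1) (x\<^sup>2 / 2) * ennreal (std_normal_density x * indicator {0<..} x) \<partial>lborel)"
      by simp
    also have "\<dots> = (\<integral>\<^sup>+w. (\<lambda>_. 1) w * ennreal (gd (1/2) w / 2) \<partial>lborel)"
      by (rule half_pos) simp
    also have "\<dots> = (\<integral>\<^sup>+w. ennreal (gd (1/2) w) * ennreal (1/2) \<partial>lborel)"
      by (intro nn_integral_cong) (simp add: half_e gd_nonneg)
    also have "\<dots> = ennreal (1/2)"
      by (subst nn_integral_multc) (auto simp: gd_mass)
    finally show ?thesis .
  qed
  have "1 = (\<integral>\<^sup>+x. ennreal (std_normal_density x * indicator {..0} x) + ennreal (std_normal_density x * indicator {0<..} x) \<partial>lborel)"
    unfolding std_normal_mass[symmetric]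
    by (intro nn_integral_cong) (auto simp: indicator_def)
  also have "\<dots> = (\<integral>\<^sup>+x. ennreal (std_normal_density x * indicator {..0} x) \<partial>lborel) + ennreal (1/2)"
    by (subst nn_integral_add) (auto simp: pos)
  finally have eq: "(\<integral>\<^sup>+x. ennreal (std_normal_density x * indicator {..0} x) \<partial>lborel) + ennreal (1/2) = ennreal (1/2) + ennreal (1/2)"
    by (simp add: two_inv')
  then have "ennreal (1/2) + (\<integral>\<^sup>+x. ennreal (std_normal_density x * indicator {..0} x) \<partial>lborel) = ennreal (1/2) + ennreal (1/2)"
    by (simp only: add.commute)
  then show ?thesis
    unfolding ennreal_add_left_cancel by simp
qed

lemma relu_sq_normal:
  assumes F[measurable]: "F \<in> borel_measurable borel"
  shows "2 * (\<integral>\<^sup>+g. F ((max g 0)\<^sup>2 / 2) * ennreal (std_normal_density g) \<partial>lborel)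
       = F 0 + (\<integral>\<^sup>+w. F w * ennreal (gd (1/2) w) \<partial>lborel)"
proof -
  have "(\<integral>\<^sup>+g. F ((max g 0)\<^sup>2 / 2) * ennreal (std_normal_density g) \<partial>lborel)
      = (\<integral>\<^sup>+g. F 0 * ennreal (std_normal_density g * indicator {..0} g) +
               F (g\<^sup>2 / 2) * ennreal (std_normal_density g * indicator {0<..} g) \<partial>lborel)"
    by (intro nn_integral_cong) (auto simp: indicator_def max_def)
  also have "\<dots> = F 0 * ennreal (1/2) + (\<integral>\<^sup>+w. F w * ennreal (gd (1/2) w / 2) \<partial>lborel)"
    by (subst nn_integral_add) (auto simp: nn_integral_cmult half_mass_neg half_pos)
  also have "(\<integral>\<^sup>+w. F w * ennreal (gd (1/2) w / 2) \<partial>lborel) = (\<integral>\<^sup>+w. F w * ennreal (gd (1/2) w) \<partial>lborel) * ennreal (1/2)"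
    by (subst nn_integral_multc[symmetric]) (auto intro!: nn_integral_cong simp: half_e gd_nonneg mult.assoc)
  finally have "2 * (\<integral>\<^sup>+g. F ((max g 0)\<^sup>2 / 2) * ennreal (std_normal_density g) \<partial>lborel)
     = 2 * (F 0 * ennreal (1/2) + (\<integral>\<^sup>+w. F w * ennreal (gd (1/2) w) \<partial>lborel) * ennreal (1/2))" by simp
  also have "\<dots> = F 0 * (2 * ennreal (1/2)) + (\<integral>\<^sup>+w. F w * ennreal (gd (1/2) w) \<partial>lborel) * (2 * ennreal (1/2))"
    by (simp only: distrib_left mult.assoc mult.commute mult.left_commute)
  also have "\<dots> = F 0 + (\<integral>\<^sup>+w. F w * ennreal (gd (1/2) w) \<partial>lborel)"
    by (simp only: ennreal_half two_inv mult_1_right)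
  finally show ?thesis .
qed

definition Mix :: "nat \<Rightarrow> (real \<Rightarrow> ennreal) \<Rightarrow> ennreal" where
  "Mix n F = (if n = 0 then F 0 else \<integral>\<^sup>+w. F w * ennreal (gd (real n / 2) w) \<partial>lborel)"

definition hr :: "real \<Rightarrow> real" where "hr g = (max g 0)\<^sup>2 / 2"

lemma hr_measurable[measurable]: "hr \<in> borel_measurable borel"
  unfolding hr_def by measurable

definition N1 :: "real measure" where "N1 = density lborel (\<lambda>x. ennreal (std_normal_density x))"

lemma sets_N1[measurable_cong, simp]: "sets N1 = sets borel"
  by (simp add: N1_def)

lemma space_N1[simp]: "space N1 = UNIV"
  by (simp add: N1_def)

lemma prob_N1: "prob_space N1"
  unfolding N1_def by (rule prob_space_normal_density) simp

lemma pascal_ennreal: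
  fixes a :: "nat \<Rightarrow> ennreal"
  shows "(\<Sum>n\<le>m. of_nat (m choose n) * (a n + a (Suc n))) = (\<Sum>n\<le>Suc m. of_nat (Suc m choose n) * a n)"
proof -
  have A: "(\<Sum>n\<le>m. of_nat (m choose n) * a n) = a 0 + (\<Sum>n\<le>m. of_nat (m choose Suc n) * a (Suc n))"
  proof -
    have "(\<Sum>n\<le>Suc m. of_nat (m choose n) * a n) = (\<Sum>n\<le>m. of_nat (m choose n) * a n)"
      by simp
    moreover have "(\<Sum>n\<le>Suc m. of_nat (m choose n) * a n) = a 0 + (\<Sum>n\<le>m. of_nat (m choose Suc n) * a (Suc n))"
      by (subst sum.atMost_Suc_shift) simp
    ultimately show ?thesis by (simp add: binomial_eq_0)
  qed
  have "(\<Sum>n\<le>Suc m. of_nat (Suc m choose n) * a n) = a 0 + (\<Sum>n\<le>m. of_nat (Suc m choose Suc n) * a (Suc n))"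
    by (subst sum.atMost_Suc_shift) simp
  also have "\<dots> = a 0 + (\<Sum>n\<le>m. of_nat (m choose n) * a (Suc n) + of_nat (m choose Suc n) * a (Suc n))"
    by (simp add: distrib_right)
  also have "\<dots> = (\<Sum>n\<le>m. of_nat (m choose n) * a n) + (\<Sum>n\<le>m. of_nat (m choose n) * a (Suc n))"
    by (simp add: A sum.distrib add.assoc add.commute add.left_commute)
  also have "\<dots> = (\<Sum>n\<le>m. of_nat (m choose n) * (a n + a (Suc n)))"
    by (simp add: sum.distrib distrib_left)
  finally show ?thesis ..
qed

lemma mix_step:
  assumes F[measurable]: "F \<in> borel_measurable borel"
  shows "Mix n (\<lambda>c. 2 * (\<integral>\<^sup>+y. F (c + hr y) * ennreal (std_normal_density y) \<partial>lborel))
       = Mix n F + Mix (Suc n) F"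
proof -
  have G: "2 * (\<integral>\<^sup>+y. F (c + hr y) * ennreal (std_normal_density y) \<partial>lborel)
      = F c + (\<integral>\<^sup>+w. F (c + w) * ennreal (gd (1/2) w) \<partial>lborel)" for c
    using relu_sq_normal[of "\<lambda>z. F (c + z)"] by (simp add: hr_def)
  show ?thesis
  proof (cases "n = 0")
    case True
    then show ?thesis by (simp add: Mix_def G)
  next
    case False
    then have n: "real n / 2 > 0" by simp
    have "Mix n (\<lambda>c. 2 * (\<integral>\<^sup>+y. F (c + hr y) * ennreal (std_normal_density y) \<partial>lborel))
        = (\<integral>\<^sup>+z. F z * ennreal (gd (real n / 2) z) +
                 (\<integral>\<^sup>+w. F (z + w) * ennreal (gd (1/2) w) \<partial>lborel) * ennreal (gd (real n / 2) z) \<partial>lborel)"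
      using False by (simp add: Mix_def G distrib_right)
    also have "\<dots> = Mix n F + (\<integral>\<^sup>+z. (\<integral>\<^sup>+w. F (z + w) * ennreal (gd (1/2) w) \<partial>lborel) * ennreal (gd (real n / 2) z) \<partial>lborel)"
      using False by (subst nn_integral_add) (auto simp: Mix_def)
    also have "(\<integral>\<^sup>+z. (\<integral>\<^sup>+w. F (z + w) * ennreal (gd (1/2) w) \<partial>lborel) * ennreal (gd (real n / 2) z) \<partial>lborel)
        = (\<integral>\<^sup>+w. F w * ennreal (gd (real n / 2 + 1/2) w) \<partial>lborel)"
      by (rule gd_conv[OF n]) auto
    also have "real n / 2 + 1/2 = real (Suc n) / 2" by simp
    finally show ?thesis by (simp add: Mix_def)
  qed
qed

lemma mix_step_N1:
  assumes F[measurable]: "F \<in> borel_measurable borel"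
  shows "Mix n (\<lambda>c. 2 * (\<integral>\<^sup>+y. F (c + hr y) \<partial>N1)) = Mix n F + Mix (Suc n) F"
proof -
  have "(\<lambda>c. 2 * (\<integral>\<^sup>+y. F (c + hr y) \<partial>N1)) = (\<lambda>c. 2 * (\<integral>\<^sup>+y. F (c + hr y) * ennreal (std_normal_density y) \<partial>lborel))"
    unfolding N1_def by (subst nn_integral_density) (auto simp: mult.commute)
  then show ?thesis using mix_step[OF F] by simp
qed

lemma mixture:
  assumes "finite I"
  shows "\<forall>F. F \<in> borel_measurable borel \<longrightarrow>
     2 ^ card I * (\<integral>\<^sup>+x. F (\<Sum>i\<in>I. hr (x i)) \<partial>PiM I (\<lambda>_. N1))
       = (\<Sum>n\<le>card I. of_nat (card I choose n) * Mix n F)"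
  using assms
proof (induction I rule: finite_induct)
  case empty
  show ?case by (simp add: PiM_empty Mix_def)
next
  case (insert i I)
  interpret N1: prob_space N1 by (rule prob_N1)
  interpret P: product_sigma_finite "\<lambda>_. N1"
    by (simp add: product_sigma_finite_def N1.sigma_finite_measure_axioms)
  show ?case
  proof (intro allI impI)
    fix F :: "real \<Rightarrow> ennreal" assume F[measurable]: "F \<in> borel_measurable borel"
    define G where "G c = 2 * (\<integral>\<^sup>+y. F (c + hr y) \<partial>N1)" for c
    have G[measurable]: "G \<in> borel_measurable borel"
      unfolding G_def by measurable
    have "(\<integral>\<^sup>+x. F (\<Sum>j\<in>insert i I. hr (x j)) \<partial>PiM (insert i I) (\<lambda>_. N1))
        = (\<integral>\<^sup>+x. (\<integral>\<^sup>+y. F (\<Sum>j\<in>insert i I. hr ((x(i := y)) j)) \<partial>N1) \<partial>PiM I (\<lambda>_. N1))"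
      by (rule P.product_nn_integral_insert) (use insert in auto)
    also have "\<dots> = (\<integral>\<^sup>+x. (\<integral>\<^sup>+y. F ((\<Sum>j\<in>I. hr (x j)) + hr y) \<partial>N1) \<partial>PiM I (\<lambda>_. N1))"
    proof (rule nn_integral_cong)
      fix x :: "'a \<Rightarrow> real"
      have "(\<Sum>j\<in>insert i I. hr ((x(i := y0)) j)) = (\<Sum>j\<in>I. hr (x j)) + hr y0" for y0
      proof -
        have "(\<Sum>j\<in>I. hr ((x(i := y0)) j)) = (\<Sum>j\<in>I. hr (x j))"
          using insert by (intro sum.cong) auto
        then show ?thesis using insert by simp
      qed
      then show "(\<integral>\<^sup>+y. F (\<Sum>j\<in>insert i I. hr ((x(i := y)) j)) \<partial>N1) = (\<integral>\<^sup>+y. F ((\<Sum>j\<in>I. hr (x j)) + hr y) \<partial>N1)"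
        by simp
    qed
    finally have eq1: "2 ^ card (insert i I) * (\<integral>\<^sup>+x. F (\<Sum>j\<in>insert i I. hr (x j)) \<partial>PiM (insert i I) (\<lambda>_. N1))
        = 2 ^ card I * (\<integral>\<^sup>+x. G (\<Sum>j\<in>I. hr (x j)) \<partial>PiM I (\<lambda>_. N1))"
      using insert unfolding G_def
      by (subst nn_integral_cmult) (auto simp: mult_ac)
    also have "\<dots> = (\<Sum>n\<le>card I. of_nat (card I choose n) * Mix n G)"
      using insert.IH G by blast
    also have "\<dots> = (\<Sum>n\<le>card I. of_nat (card I choose n) * (Mix n F + Mix (Suc n) F))"
      unfolding G_def by (simp add: mix_step_N1[OF F])
    also have "\<dots> = (\<Sum>n\<le>Suc (card I). of_nat (Suc (card I) choose n) * Mix n F)"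
      by (rule pascal_ennreal)
    finally show "2 ^ card (insert i I) * (\<integral>\<^sup>+x. F (\<Sum>j\<in>insert i I. hr (x j)) \<partial>PiM (insert i I) (\<lambda>_. N1))
        = (\<Sum>n\<le>card (insert i I). of_nat (card (insert i I) choose n) * Mix n F)"
      using insert by simp
  qed
qed

lemma mix_pow:
  assumes a: "a > 0" and c: "c > 0" and q: "q > 0"
  shows "(\<integral>\<^sup>+w. ennreal ((c * w) powr q) * ennreal (gd a w) \<partial>lborel) = ennreal (c powr q * (Gamma (a + q) / Gamma a))"
proof -
  have "(\<integral>\<^sup>+w. ennreal ((c * w) powr q) * ennreal (gd a w) \<partial>lborel)
      = (\<integral>\<^sup>+w. ennreal (w powr q * gd a w) * ennreal (c powr q) \<partial>lborel)"
  proof (intro nn_integral_cong)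
    fix w :: real
    show "ennreal ((c * w) powr q) * ennreal (gd a w) = ennreal (w powr q * gd a w) * ennreal (c powr q)"
    proof (cases "w \<ge> 0")
      case True
      then show ?thesis using c a gd_nonneg[OF a, of w]
        by (simp add: powr_mult ennreal_mult[symmetric] mult_ac)
    next
      case False
      then show ?thesis by (simp add: gd_def)
    qed
  qed
  also have "\<dots> = ennreal (Gamma (a + q) / Gamma a) * ennreal (c powr q)"
    by (subst nn_integral_multc) (auto simp: gd_moment[OF a] q less_imp_le)
  also have "\<dots> = ennreal (c powr q * (Gamma (a + q) / Gamma a))"
    using a q by (subst ennreal_mult[symmetric]) (auto simp: mult.commute intro!: divide_nonneg_pos Gamma_real_pos less_imp_le)
  finally show ?thesis .
qed

lemma young_pt:
  assumes "0 < s" "s < p" "z \<ge> (0::real)"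
  shows "z powr (s/2) \<le> (s/p) * z powr (p/2) + (1 - s/p)"
proof (cases "z = 0")
  case True
  then show ?thesis using assms by simp
next
  case False
  then have z: "z > 0" using assms by simp
  have "(z powr (p/2)) powr (s/p) * 1 powr (1 - s/p) \<le> (s/p) * z powr (p/2) + (1 - s/p) * 1"
    by (rule Youngs_inequality_0) (use assms z in auto)
  moreover have "(z powr (p/2)) powr (s/p) = z powr (s/2)"
    using assms by (simp add: powr_powr)
  ultimately show ?thesis by simp
qed

lemma per_n_ineq:
  fixes s p c :: real
  assumes a: "a > 0" and s: "0 < s" "s < p" and c: "c > 0"
  shows "c powr (s/2) * (Gamma (a + s/2) / Gamma a)
        \<le> (s/p) * (c powr (p/2) * (Gamma (a + p/2) / Gamma a)) + (1 - s/p)"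
proof -
  have p: "p > 0" using s by linarith
  have "ennreal (c powr (s/2) * (Gamma (a + s/2) / Gamma a))
      = (\<integral>\<^sup>+w. ennreal ((c * w) powr (s/2)) * ennreal (gd a w) \<partial>lborel)"
    using mix_pow[OF a c, of "s/2"] s by simp
  also have "\<dots> \<le> (\<integral>\<^sup>+w. ennreal (s/p) * (ennreal ((c * w) powr (p/2)) * ennreal (gd a w)) + ennreal (1 - s/p) * ennreal (gd a w) \<partial>lborel)"
  proof (intro nn_integral_mono)
    fix w :: real
    show "ennreal ((c * w) powr (s/2)) * ennreal (gd a w) \<le> ennreal (s/p) * (ennreal ((c * w) powr (p/2)) * ennreal (gd a w)) + ennreal (1 - s/p) * ennreal (gd a w)"
    proof (cases "w \<ge> 0")
      case True
      have "(c * w) powr (s/2) * gd a w \<le> ((s/p) * (c * w) powr (p/2) + (1 - s/p)) * gd a w"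
        by (rule mult_right_mono[OF young_pt]) (use s c True gd_nonneg[OF a] in auto)
      moreover have "((s/p) * (c * w) powr (p/2) + (1 - s/p)) * gd a w = (s/p) * ((c * w) powr (p/2) * gd a w) + (1 - s/p) * gd a w"
        by (simp only: distrib_right mult.assoc)
      ultimately have "ennreal ((c * w) powr (s/2) * gd a w) \<le> ennreal ((s/p) * ((c * w) powr (p/2) * gd a w) + (1 - s/p) * gd a w)"
        by (intro ennreal_leI) simp
      also have "\<dots> = ennreal (s/p) * (ennreal ((c * w) powr (p/2)) * ennreal (gd a w)) + ennreal (1 - s/p) * ennreal (gd a w)"
        using s p gd_nonneg[OF a, of w] by (simp add: ennreal_plus[symmetric] ennreal_mult[symmetric] del: ennreal_plus)
      finally show ?thesis using gd_nonneg[OF a, of w] by (simp add: ennreal_mult)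
    next
      case False
      then show ?thesis by (simp add: gd_def)
    qed
  qed
  also have "\<dots> = ennreal (s/p) * ennreal (c powr (p/2) * (Gamma (a + p/2) / Gamma a)) + ennreal (1 - s/p)"
    using p by (subst nn_integral_add) (auto simp: nn_integral_cmult mix_pow[OF a c] gd_mass[OF a])
  also have "\<dots> = ennreal ((s/p) * (c powr (p/2) * (Gamma (a + p/2) / Gamma a)) + (1 - s/p))"
    using s p a by (simp add: ennreal_plus[symmetric] ennreal_mult[symmetric] Gamma_real_pos less_imp_le del: ennreal_plus)
  finally show ?thesis
    using s p a by (subst (asm) ennreal_le_iff) (auto intro!: add_nonneg_nonneg mult_nonneg_nonneg divide_nonneg_pos Gamma_real_pos less_imp_le)
qed

lemma gamma_ratio_nonneg: "p > 0 \<Longrightarrow> Gamma (real n / 2 + p / 2) / Gamma (real n / 2) \<ge> 0"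
  by (cases "n = 0") (auto intro!: divide_nonneg_pos Gamma_real_pos less_imp_le)

lemma mix_pow_all:
  assumes c: "c > 0" and p: "p > 0"
  shows "Mix n (\<lambda>z. ennreal ((c * z) powr (p/2))) = ennreal (c powr (p/2) * (Gamma (real n / 2 + p / 2) / Gamma (real n / 2)))"
proof (cases "n = 0")
  case True
  then show ?thesis by (simp add: Mix_def)
next
  case False
  then show ?thesis using mix_pow[of "real n / 2" c "p/2"] c p by (simp add: Mix_def)
qed

lemma moment_PiM:
  fixes I :: "'a set" and \<tau> p :: real
  assumes I: "finite I" and p: "p > 0" and \<tau>: "\<tau> > 0"
  shows "(\<integral>\<^sup>+x. ennreal ((2 * \<tau>\<^sup>2 * (\<Sum>i\<in>I. hr (x i))) powr (p/2)) \<partial>PiM I (\<lambda>_. N1))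
       = ennreal (\<tau> powr p * I0 p (card I))"
proof -
  define d where "d = card I"
  define c where "c = 2 * \<tau>\<^sup>2"
  have c: "c > 0" using \<tau> by (simp add: c_def)
  define m where "m n = c powr (p/2) * (Gamma (real n / 2 + p / 2) / Gamma (real n / 2))" for n
  have m0: "m n \<ge> 0" for n unfolding m_def using p by (intro mult_nonneg_nonneg gamma_ratio_nonneg) auto
  have F: "(\<lambda>z. ennreal ((c * z) powr (p/2))) \<in> borel_measurable borel" by measurable
  have "2 ^ d * (\<integral>\<^sup>+x. ennreal ((c * (\<Sum>i\<in>I. hr (x i))) powr (p/2)) \<partial>PiM I (\<lambda>_. N1))
      = (\<Sum>n\<le>d. of_nat (d choose n) * Mix n (\<lambda>z. ennreal ((c * z) powr (p/2))))"
    using mixture[OF I] F unfolding d_def by blast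
  also have "\<dots> = (\<Sum>n\<le>d. ennreal (real (d choose n) * m n))"
  proof (intro sum.cong refl)
    fix n
    have mx: "Mix n (\<lambda>z. ennreal ((c * z) powr (p/2))) = ennreal (m n)"
      unfolding m_def by (rule mix_pow_all[OF c p])
    have "ennreal (real (d choose n) * m n) = ennreal (real (d choose n)) * ennreal (m n)"
      by (rule ennreal_mult') simp
    then show "of_nat (d choose n) * Mix n (\<lambda>z. ennreal ((c * z) powr (p/2))) = ennreal (real (d choose n) * m n)"
      by (simp only: mx ennreal_of_nat_eq_real_of_nat)
  qed
  also have "\<dots> = ennreal (\<Sum>n\<le>d. real (d choose n) * m n)"
    using m0 by (intro sum_ennreal) auto
  moreover have e2: "(2::ennreal) ^ d = ennreal (2 ^ d)"
    by (metis ennreal_numeral ennreal_power zero_le_numeral)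
  moreover have "(2::ennreal) ^ d * ennreal (S / 2 ^ d) = ennreal S" for S
    unfolding e2 by (subst ennreal_mult'[symmetric]) auto
  ultimately have eq: "2 ^ d * (\<integral>\<^sup>+x. ennreal ((c * (\<Sum>i\<in>I. hr (x i))) powr (p/2)) \<partial>PiM I (\<lambda>_. N1))
      = 2 ^ d * ennreal ((\<Sum>n\<le>d. real (d choose n) * m n) / 2 ^ d)"
    by simp
  have "(\<integral>\<^sup>+x. ennreal ((c * (\<Sum>i\<in>I. hr (x i))) powr (p/2)) \<partial>PiM I (\<lambda>_. N1))
      = ennreal ((\<Sum>n\<le>d. real (d choose n) * m n) / 2 ^ d)"
    using eq by (subst (asm) ennreal_mult_cancel_left) (auto simp: e2)
  also have "(\<Sum>n\<le>d. real (d choose n) * m n) / 2 ^ d = \<tau> powr p * I0 p d"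
  proof -
    have "{..d} = insert 0 {1..d}" by auto
    then have "(\<Sum>n\<le>d. real (d choose n) * m n) = (\<Sum>n=1..d. real (d choose n) * m n)"
      by (simp add: m_def)
    moreover have "c powr (p/2) = 2 powr (p/2) * \<tau> powr p"
    proof -
      have "\<tau> powr 2 = \<tau>\<^sup>2" using \<tau> powr_realpow[of \<tau> 2] by simp
      then have "\<tau>\<^sup>2 powr (p/2) = \<tau> powr p" using \<tau> by (metis powr_powr times_divide_eq_right nonzero_mult_div_cancel_left zero_neq_numeral)
      then show ?thesis using \<tau> by (simp add: c_def powr_mult)
    qed
    ultimately show ?thesis
      unfolding I0_def m_def
      by (simp add: sum_divide_distrib sum_distrib_left mult_ac)
  qed
  finally show ?thesis by (simp add: c_def d_def)
qed

lemma I0_as_sum: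
  assumes \<sigma>: "\<sigma> > 0" and q: "q > 0"
  shows "\<sigma> powr q * I0 q d = (\<Sum>n=1..d. real (d choose n) / 2 ^ d * ((2 * \<sigma>\<^sup>2) powr (q/2) * (Gamma (real n / 2 + q / 2) / Gamma (real n / 2))))"
proof -
  have "\<sigma> powr 2 = \<sigma>\<^sup>2" using \<sigma> powr_realpow[of \<sigma> 2] by simp
  then have "\<sigma>\<^sup>2 powr (q/2) = \<sigma> powr q" using \<sigma> by (metis powr_powr times_divide_eq_right nonzero_mult_div_cancel_left zero_neq_numeral)
  then have c: "(2 * \<sigma>\<^sup>2) powr (q/2) = 2 powr (q/2) * \<sigma> powr q"
    using \<sigma> by (simp add: powr_mult)
  show ?thesis unfolding I0_def c
    by (simp add: sum_distrib_left mult_ac)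
qed

lemma binom_sum_1: "(\<Sum>n=1..d. real (d choose n)) = 2 ^ d - 1"
proof -
  have "{..d} = insert 0 {1..d}" by auto
  then have "(\<Sum>n\<le>d. real (d choose n)) = 1 + (\<Sum>n=1..d. real (d choose n))" by simp
  moreover have "(\<Sum>n\<le>d. real (d choose n)) = 2 ^ d"
    using choose_row_sum[of d] by (metis of_nat_numeral of_nat_power of_nat_sum)
  ultimately show ?thesis by simp
qed

lemma I0_ineq:
  fixes s p \<sigma> :: real
  assumes s: "0 < s" "s < p" and \<sigma>: "\<sigma> > 0"
  shows "\<sigma> powr s * I0 s d \<le> (s/p) * (\<sigma> powr p * I0 p d) + (1 - s/p) * (1 - 1 / 2 ^ d)"
proof -
  have p: "p > 0" using s by linarith
  define c where "c = 2 * \<sigma>\<^sup>2"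
  have c: "c > 0" using \<sigma> by (simp add: c_def)
  define X where "X q n = c powr (q/2) * (Gamma (real n / 2 + q / 2) / Gamma (real n / 2))" for q n
  define w where "w n = real (d choose n) / 2 ^ d" for n
  have w: "w n \<ge> 0" for n by (simp add: w_def)
  have "\<sigma> powr s * I0 s d = (\<Sum>n=1..d. w n * X s n)"
    unfolding I0_as_sum[OF \<sigma> s(1)] w_def X_def c_def ..
  also have "\<dots> \<le> (\<Sum>n=1..d. w n * ((s/p) * X p n + (1 - s/p)))"
  proof (intro sum_mono mult_left_mono w)
    fix n assume "n \<in> {1..d}"
    then have "real n / 2 > 0" by auto
    from per_n_ineq[OF this s c] show "X s n \<le> s / p * X p n + (1 - s / p)"
      unfolding X_def by (simp add: add_ac)
  qed
  also have "\<dots> = (s/p) * (\<Sum>n=1..d. w n * X p n) + (1 - s/p) * (\<Sum>n=1..d. w n)"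
    by (simp add: sum.distrib sum_distrib_left distrib_left mult_ac)
  also have "(\<Sum>n=1..d. w n * X p n) = \<sigma> powr p * I0 p d"
    unfolding I0_as_sum[OF \<sigma> p] w_def X_def c_def ..
  also have "(\<Sum>n=1..d. w n) = 1 - 1 / 2 ^ d"
    unfolding w_def sum_divide_distrib[symmetric] binom_sum_1 by (simp add: diff_divide_distrib)
  finally show ?thesis .
qed

lemma vec_measurable:
  fixes f :: "'a \<Rightarrow> real^'n"
  assumes "\<And>j. (\<lambda>x. f x $ j) \<in> borel_measurable M"
  shows "f \<in> borel_measurable M"
proof -
  have "(\<lambda>x. f x \<bullet> b) \<in> borel_measurable M" if "b \<in> Basis" for b
  proof -
    obtain j where b: "b = axis j 1" using \<open>b \<in> Basis\<close> by (auto simp: Basis_vec_def)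
    have "(\<lambda>x. f x \<bullet> b) = (\<lambda>x. f x $ j)" unfolding b by (simp add: inner_axis)
    then show ?thesis using assms by simp
  qed
  then show ?thesis by (subst borel_measurable_euclidean_space) blast
qed

lemma vec_measurable':
  fixes f :: "'a \<Rightarrow> 'b::euclidean_space^'n"
  assumes "\<And>j. (\<lambda>x. f x $ j) \<in> borel_measurable M"
  shows "f \<in> borel_measurable M"
proof -
  have "(\<lambda>x. f x \<bullet> b) \<in> borel_measurable M" if "b \<in> Basis" for b
  proof -
    obtain j u where b: "b = axis j u" using \<open>b \<in> Basis\<close> by (auto simp: Basis_vec_def)
    have "(\<lambda>x. f x \<bullet> b) = (\<lambda>x. f x $ j \<bullet> u)" unfolding b by (simp add: inner_axis)
    then show ?thesis using assms by simp
  qed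
  then show ?thesis by (subst borel_measurable_euclidean_space) blast
qed

lemma norm_powr_vec:
  fixes x :: "real^'n"
  shows "norm x powr p = (\<Sum>i\<in>UNIV. (x$i)\<^sup>2) powr (p/2)"
proof -
  have s: "(\<Sum>i\<in>UNIV. (x$i)\<^sup>2) \<ge> 0" by (simp add: sum_nonneg)
  have "norm x = sqrt (\<Sum>i\<in>UNIV. (x$i)\<^sup>2)" unfolding norm_vec_def L2_set_def by simp
  also have "\<dots> = (\<Sum>i\<in>UNIV. (x$i)\<^sup>2) powr (1/2)" by (rule powr_half_sqrt[symmetric]) (rule s)
  finally have "norm x powr p = ((\<Sum>i\<in>UNIV. (x$i)\<^sup>2) powr (1/2)) powr p" by simp
  also have "\<dots> = (\<Sum>i\<in>UNIV. (x$i)\<^sup>2) powr (1/2 * p)" by (rule powr_powr)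
  finally show ?thesis by simp
qed

definition relu :: "real^'n \<Rightarrow> real^'n" where "relu u = (\<chi> i. prelu 0 (u $ i))"

lemma layer_Suc: "layer_out 0 W x0 (Suc k) \<omega> = relu (W k \<omega> *v layer_out 0 W x0 k \<omega>)"
  by (simp add: relu_def)

lemma layer_out_cong:
  assumes "\<And>k'. k' < k \<Longrightarrow> W' k' b = W k' \<omega>"
  shows "layer_out a W' x0 k b = layer_out a W x0 k \<omega>"
  using assms by (induction k) auto

locale net =
  fixes M :: "'w measure" and W :: "nat \<Rightarrow> 'w \<Rightarrow> real^'n^'n" and \<sigma> :: real
  assumes P: "prob_space M" and \<sigma>: "\<sigma> > 0"
    and ind: "prob_space.indep_vars M (\<lambda>_. borel) (\<lambda>(k, i, j) \<omega>. W k \<omega> $ i $ j) UNIV"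
    and dist: "\<And>k i j. distributed M lborel (\<lambda>\<omega>. W k \<omega> $ i $ j) (normal_density 0 \<sigma>)"
begin

sublocale prob_space M by (rule P)

definition X :: "nat \<times> 'n \<times> 'n \<Rightarrow> 'w \<Rightarrow> real" where "X = (\<lambda>(k, i, j) \<omega>. W k \<omega> $ i $ j)"

lemma X_simp[simp]: "X (k, i, j) \<omega> = W k \<omega> $ i $ j" by (simp add: X_def)

lemma indX: "indep_vars (\<lambda>_. borel) X UNIV" using ind unfolding X_def .

lemma W_meas[measurable]: "(\<lambda>\<omega>. W k \<omega> $ i $ j) \<in> borel_measurable M"
  using distributed_measurable[OF dist[of k i j]] by simp

lemma X_meas: "X t \<in> borel_measurable M"
  by (cases t) (simp add: X_def)

lemma indep_entries:
  assumes K: "\<And>j. j \<in> L \<Longrightarrow> K j \<subseteq> UNIV" and disj: "disjoint_family_on K L"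
  shows "indep_vars (\<lambda>j. PiM (K j) (\<lambda>_. borel)) (\<lambda>j \<omega>. restrict (\<lambda>t. X t \<omega>) (K j)) L"
  by (rule indep_vars_restrict[OF indX K disj])

lemma indep_row:
  fixes k i and c :: "'n \<Rightarrow> real"
  shows "indep_vars (\<lambda>_. borel) (\<lambda>j \<omega>. W k \<omega> $ i $ j * c j) UNIV"
proof -
  have "indep_vars (\<lambda>j. PiM {(k, i, j)} (\<lambda>_. borel)) (\<lambda>j \<omega>. restrict (\<lambda>t. X t \<omega>) {(k, i, j)}) UNIV"
    by (rule indep_entries) (auto simp: disjoint_family_on_def)
  then have "indep_vars (\<lambda>_. borel) (\<lambda>j \<omega>. (\<lambda>r. r (k, i, j) * c j) (restrict (\<lambda>t. X t \<omega>) {(k, i, j)})) UNIV"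
    by (rule indep_vars_compose2) measurable
  then show ?thesis by simp
qed

lemma indep_rows:
  fixes k and c :: "'n \<Rightarrow> real"
  shows "indep_vars (\<lambda>_. borel) (\<lambda>i \<omega>. (\<Sum>j\<in>UNIV. W k \<omega> $ i $ j * c j)) UNIV"
proof -
  have "indep_vars (\<lambda>i. PiM ({k} \<times> {i} \<times> UNIV) (\<lambda>_. borel)) (\<lambda>i \<omega>. restrict (\<lambda>t. X t \<omega>) ({k} \<times> {i} \<times> UNIV)) UNIV"
    by (rule indep_entries) (auto simp: disjoint_family_on_def)
  then have "indep_vars (\<lambda>_. borel) (\<lambda>i \<omega>. (\<lambda>r. (\<Sum>j\<in>UNIV. r (k, i, j) * c j)) (restrict (\<lambda>t. X t \<omega>) ({k} \<times> {i} \<times> UNIV))) UNIV"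
    by (rule indep_vars_compose2) measurable
  then show ?thesis by simp
qed

end

lemma norm_vec_sq: "norm (v::real^'n) = sqrt (\<Sum>j\<in>UNIV. (v$j)\<^sup>2)"
  unfolding norm_vec_def L2_set_def by simp

context net begin

lemma row_normal:
  assumes v: "v \<noteq> 0"
  shows "distributed M lborel (\<lambda>\<omega>. \<Sum>j\<in>UNIV. W k \<omega> $ i $ j * v $ j) (normal_density 0 (\<sigma> * norm v))"
proof -
  define S where "S = {j. v $ j \<noteq> 0}"
  have S: "S \<noteq> {}" using v unfolding S_def by (auto simp: vec_eq_iff)
  have each: "distributed M lborel (\<lambda>\<omega>. W k \<omega> $ i $ j * v $ j) (normal_density 0 (\<bar>v $ j\<bar> * \<sigma>))"
    if "j \<in> S" for j
  proof -
    have "v $ j \<noteq> 0" using that by (simp add: S_def)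
    from normal_density_affine[OF dist[of k i j] \<sigma> this, of 0]
    show ?thesis by (simp add: mult.commute)
  qed
  have indS: "indep_vars (\<lambda>_. borel) (\<lambda>j \<omega>. W k \<omega> $ i $ j * v $ j) S"
    by (rule indep_vars_subset[OF indep_row]) simp
  have "distributed M lborel (\<lambda>\<omega>. \<Sum>j\<in>S. W k \<omega> $ i $ j * v $ j)
          (normal_density (\<Sum>j\<in>S. 0) (sqrt (\<Sum>j\<in>S. (\<bar>v $ j\<bar> * \<sigma>)\<^sup>2)))"
    by (rule sum_indep_normal[OF _ S indS _ each]) (auto simp: S_def \<sigma>)
  moreover have "(\<lambda>\<omega>. \<Sum>j\<in>S. W k \<omega> $ i $ j * v $ j) = (\<lambda>\<omega>. \<Sum>j\<in>UNIV. W k \<omega> $ i $ j * v $ j)"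
    by (intro ext sum.mono_neutral_left) (auto simp: S_def)
  moreover have "sqrt (\<Sum>j\<in>S. (\<bar>v $ j\<bar> * \<sigma>)\<^sup>2) = \<sigma> * norm v"
  proof -
    have "(\<Sum>j\<in>S. (\<bar>v $ j\<bar> * \<sigma>)\<^sup>2) = \<sigma>\<^sup>2 * (\<Sum>j\<in>UNIV. (v $ j)\<^sup>2)"
    proof -
      have "(\<Sum>j\<in>S. (\<bar>v $ j\<bar> * \<sigma>)\<^sup>2) = (\<Sum>j\<in>UNIV. (\<bar>v $ j\<bar> * \<sigma>)\<^sup>2)"
        by (intro sum.mono_neutral_left) (auto simp: S_def)
      also have "\<dots> = \<sigma>\<^sup>2 * (\<Sum>j\<in>UNIV. (v $ j)\<^sup>2)"
        by (simp add: sum_distrib_left power_mult_distrib mult.commute)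
      finally show ?thesis .
    qed
    then show ?thesis using \<sigma> by (simp add: norm_vec_sq real_sqrt_mult)
  qed
  ultimately show ?thesis by simp
qed

definition g :: "real^'n \<Rightarrow> nat \<Rightarrow> 'n \<Rightarrow> 'w \<Rightarrow> real" where
  "g v k i \<omega> = inverse (\<sigma> * norm v) * (\<Sum>j\<in>UNIV. W k \<omega> $ i $ j * v $ j)"

lemma g_meas[measurable]: "g v k i \<in> borel_measurable M"
  unfolding g_def by measurable

lemma g_normal:
  assumes v: "v \<noteq> 0"
  shows "distributed M lborel (g v k i) std_normal_density"
proof -
  have a: "inverse (\<sigma> * norm v) \<noteq> 0" "\<sigma> * norm v > 0" using v \<sigma> by auto
  have e: "inverse \<bar>\<sigma>\<bar> * inverse (norm v) * (\<sigma> * norm v) = 1" using \<sigma> v by (simp add: field_simps)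
  from normal_density_affine[OF row_normal[OF v] a(2) a(1), of 0]
  show ?thesis using a unfolding g_def by (simp add: abs_mult e)
qed

lemma g_indep: "indep_vars (\<lambda>_. borel) (g v k) UNIV"
proof -
  have "indep_vars (\<lambda>_. borel) (\<lambda>i \<omega>. (\<lambda>x. inverse (\<sigma> * norm v) * x) (\<Sum>j\<in>UNIV. W k \<omega> $ i $ j * v $ j)) UNIV"
    by (rule indep_vars_compose2[OF indep_rows]) measurable
  then show ?thesis unfolding g_def by simp
qed

lemma g_PiM:
  assumes v: "v \<noteq> 0"
  shows "distr M (PiM UNIV (\<lambda>_. borel)) (\<lambda>\<omega>. \<lambda>i\<in>UNIV. g v k i \<omega>) = PiM UNIV (\<lambda>_. N1)"
proof -
  have "distr M (PiM UNIV (\<lambda>_. borel)) (\<lambda>\<omega>. \<lambda>i\<in>UNIV. g v k i \<omega>) = PiM UNIV (\<lambda>i. distr M borel (g v k i))"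
    using indep_vars_iff_distr_eq_PiM[where I=UNIV and M'="\<lambda>_. borel" and X="g v k"] g_indep by simp
  also have "(\<lambda>i. distr M borel (g v k i)) = (\<lambda>_. N1)"
  proof
    fix i
    have "distr M borel (g v k i) = distr M lborel (g v k i)"
      by (rule distr_cong) auto
    also have "\<dots> = N1"
      unfolding N1_def by (rule distributed_distr_eq_density[OF g_normal[OF v]])
    finally show "distr M borel (g v k i) = N1" .
  qed
  finally show ?thesis .
qed

end

lemma prelu_sq: "(prelu 0 (t * y))\<^sup>2 = t\<^sup>2 * (2 * hr y)" if "t > 0" for t y :: real
  using that by (auto simp: prelu_def hr_def max_def power_mult_distrib zero_less_mult_iff mult_le_0_iff)

context net begin

lemma one_layer:
  assumes p: "p > 0"
  shows "(\<integral>\<^sup>+\<omega>. ennreal (norm (relu (W k \<omega> *v v)) powr p) \<partial>M)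
       = ennreal (\<sigma> powr p * norm v powr p * I0 p CARD('n))"
proof (cases "v = 0")
  case True
  have "relu (W k \<omega> *v v) = 0" for \<omega> using True by (simp add: relu_def prelu_def vec_eq_iff matrix_vector_mult_def)
  then show ?thesis using True by simp
next
  case False
  define \<tau> where "\<tau> = \<sigma> * norm v"
  have \<tau>: "\<tau> > 0" using \<sigma> False by (simp add: \<tau>_def)
  have pt: "norm (relu (W k \<omega> *v v)) powr p = (2 * \<tau>\<^sup>2 * (\<Sum>i\<in>UNIV. hr (g v k i \<omega>))) powr (p/2)" for \<omega>
  proof -
    have "(relu (W k \<omega> *v v)) $ i = prelu 0 (\<tau> * g v k i \<omega>)" for i
    proof -
      have "\<tau> * g v k i \<omega> = (\<Sum>j\<in>UNIV. W k \<omega> $ i $ j * v $ j)"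
        using \<sigma> False unfolding g_def \<tau>_def by (simp add: field_simps)
      then show ?thesis by (simp add: relu_def matrix_vector_mult_def)
    qed
    then have "(\<Sum>i\<in>UNIV. ((relu (W k \<omega> *v v)) $ i)\<^sup>2) = (\<Sum>i\<in>UNIV. \<tau>\<^sup>2 * (2 * hr (g v k i \<omega>)))"
      using \<tau> by (simp add: prelu_sq)
    also have "\<dots> = 2 * \<tau>\<^sup>2 * (\<Sum>i\<in>UNIV. hr (g v k i \<omega>))"
      by (simp add: sum_distrib_left mult_ac)
    finally show ?thesis by (simp add: norm_powr_vec)
  qed
  have "(\<integral>\<^sup>+\<omega>. ennreal (norm (relu (W k \<omega> *v v)) powr p) \<partial>M)
      = (\<integral>\<^sup>+\<omega>. (\<lambda>x. ennreal ((2 * \<tau>\<^sup>2 * (\<Sum>i\<in>UNIV. hr (x i))) powr (p/2))) (\<lambda>i\<in>UNIV. g v k i \<omega>) \<partial>M)"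
    by (simp add: pt)
  also have "\<dots> = (\<integral>\<^sup>+x. ennreal ((2 * \<tau>\<^sup>2 * (\<Sum>i\<in>UNIV. hr (x i))) powr (p/2)) \<partial>distr M (PiM UNIV (\<lambda>_. borel)) (\<lambda>\<omega>. \<lambda>i\<in>UNIV. g v k i \<omega>))"
    by (rule nn_integral_distr[symmetric]) measurable
  also have "\<dots> = (\<integral>\<^sup>+x. ennreal ((2 * \<tau>\<^sup>2 * (\<Sum>i\<in>UNIV. hr (x i))) powr (p/2)) \<partial>PiM (UNIV :: 'n set) (\<lambda>_. N1))"
    by (simp add: g_PiM[OF False])
  also have "\<dots> = ennreal (\<tau> powr p * I0 p (card (UNIV :: 'n set)))"
    using moment_PiM[of "UNIV :: 'n set" p \<tau>] p \<tau> by simp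
  finally show ?thesis using \<sigma> by (simp add: \<tau>_def powr_mult)
qed

end

definition Wp :: "nat \<Rightarrow> (nat \<times> 'n \<times> 'n \<Rightarrow> real) \<Rightarrow> real^'n^'n" where
  "Wp k' b = (\<chi> i j. b (k', i, j))"

lemma Wp_nth[simp]: "Wp k' b $ i $ j = b (k', i, j)"
  by (simp add: Wp_def)

lemma prelu_meas[measurable]: "prelu 0 \<in> borel_measurable borel"
  unfolding prelu_def by measurable

lemma vec_nth_meas[measurable]: "(\<lambda>x::'b::euclidean_space^'n. x $ j) \<in> borel_measurable borel"
  by (intro borel_measurable_continuous_onI continuous_intros)

definition KF :: "nat \<Rightarrow> (nat \<times> 'n \<times> 'n) set" where "KF k = {t. fst t < k}"
definition KT :: "nat \<Rightarrow> (nat \<times> 'n \<times> 'n) set" where "KT k = {t. fst t = k}"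

lemma comp_meas_KF:
  assumes "k' < k"
  shows "(\<lambda>b. b (k', i, j)) \<in> borel_measurable (PiM (KF k) (\<lambda>_. borel :: real measure))"
  by (rule measurable_component_singleton) (use assms in \<open>simp add: KF_def\<close>)

lemma Lk_meas_aux:
  "k' \<le> k \<Longrightarrow> (\<lambda>b. layer_out 0 Wp x0 k' b $ j) \<in> borel_measurable (PiM (KF k) (\<lambda>_. borel :: real measure))"
proof (induction k' arbitrary: j)
  case 0
  then show ?case by simp
next
  case (Suc k')
  have IH: "(\<lambda>b. layer_out 0 Wp x0 k' b $ l) \<in> borel_measurable (PiM (KF k) (\<lambda>_. borel :: real measure))" for l
    using Suc by simp
  have c: "(\<lambda>b. b (k', j, l)) \<in> borel_measurable (PiM (KF k) (\<lambda>_. borel :: real measure))" for l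
    using Suc by (intro comp_meas_KF) simp
  have "(\<lambda>b. (\<Sum>l\<in>UNIV. b (k', j, l) * layer_out 0 Wp x0 k' b $ l)) \<in> borel_measurable (PiM (KF k) (\<lambda>_. borel :: real measure))"
    using IH c by measurable
  then have "(\<lambda>b. prelu 0 (\<Sum>l\<in>UNIV. b (k', j, l) * layer_out 0 Wp x0 k' b $ l)) \<in> borel_measurable (PiM (KF k) (\<lambda>_. borel :: real measure))"
    by measurable
  then show ?case
    by (simp add: matrix_vector_mult_def)
qed

lemma Lk_meas: "(\<lambda>b. layer_out 0 Wp x0 k b) \<in> borel_measurable (PiM (KF k) (\<lambda>_. borel :: real measure))"
  by (rule vec_measurable) (rule Lk_meas_aux, simp)

lemma relu_meas[measurable]: "relu \<in> borel_measurable (borel :: (real^'n) measure)"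
proof (rule vec_measurable)
  fix j :: 'n
  have "(\<lambda>x::real^'n. x $ j) \<in> borel_measurable borel" by (intro borel_measurable_continuous_onI continuous_intros)
  then show "(\<lambda>x::real^'n. relu x $ j) \<in> borel_measurable borel"
    unfolding relu_def by simp
qed

lemma Wp_meas: "(\<lambda>a. Wp k a) \<in> borel_measurable (PiM (KT k) (\<lambda>_. borel :: real measure))"
proof -
  have "(\<lambda>a. Wp k a $ i $ j) \<in> borel_measurable (PiM (KT k) (\<lambda>_. borel :: real measure))" for i j
    by simp (rule measurable_component_singleton, simp add: KT_def)
  then show ?thesis by (intro vec_measurable') auto
qed

context net begin

lemma indep_TF: "indep_var (PiM (KT k) (\<lambda>_. borel)) (\<lambda>\<omega>. restrict (\<lambda>t. X t \<omega>) (KT k))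
                           (PiM (KF k) (\<lambda>_. borel)) (\<lambda>\<omega>. restrict (\<lambda>t. X t \<omega>) (KF k))"
proof -
  have i: "indep_vars (\<lambda>b. PiM (case_bool (KT k) (KF k) b) (\<lambda>_. borel)) (\<lambda>b \<omega>. restrict (\<lambda>t. X t \<omega>) (case_bool (KT k) (KF k) b)) UNIV"
    by (rule indep_entries) (auto simp: disjoint_family_on_def KT_def KF_def split: bool.split)
  have e1: "(\<lambda>b. PiM (case_bool (KT k) (KF k) b) (\<lambda>_. borel)) = case_bool (PiM (KT k) (\<lambda>_. borel)) (PiM (KF k) (\<lambda>_. borel :: real measure))"
    by (rule ext) (simp split: bool.split)
  have e2: "(\<lambda>b \<omega>. restrict (\<lambda>t. X t \<omega>) (case_bool (KT k) (KF k) b)) = case_bool (\<lambda>\<omega>. restrict (\<lambda>t. X t \<omega>) (KT k)) (\<lambda>\<omega>. restrict (\<lambda>t. X t \<omega>) (KF k))"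
    by (rule ext) (simp split: bool.split)
  show ?thesis unfolding indep_var_def using i by (simp only: e1 e2)
qed

lemma markov:
  fixes G :: "real^'n \<Rightarrow> ennreal" and \<Phi> :: "real^'n \<Rightarrow> ennreal"
  assumes G[measurable]: "G \<in> borel_measurable borel"
    and \<Phi>: "\<And>v. (\<integral>\<^sup>+\<omega>. G (relu (W k \<omega> *v v)) \<partial>M) = \<Phi> v"
    and \<Phi>m[measurable]: "\<Phi> \<in> borel_measurable borel"
  shows "(\<integral>\<^sup>+\<omega>. G (layer_out 0 W x0 (Suc k) \<omega>) \<partial>M) = (\<integral>\<^sup>+\<omega>. \<Phi> (layer_out 0 W x0 k \<omega>) \<partial>M)"
proof -
  define S where "S = PiM (KT k :: (nat \<times> 'n \<times> 'n) set) (\<lambda>_. borel :: real measure)"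
  define T where "T = PiM (KF k :: (nat \<times> 'n \<times> 'n) set) (\<lambda>_. borel :: real measure)"
  define A where "A \<omega> = restrict (\<lambda>t. X t \<omega>) (KT k)" for \<omega>
  define B where "B \<omega> = restrict (\<lambda>t. X t \<omega>) (KF k)" for \<omega>
  define H where "H z = G (relu (Wp k (fst z) *v layer_out 0 Wp x0 k (snd z)))" for z
  have Am[measurable]: "A \<in> measurable M S" unfolding A_def S_def
    by (intro measurable_restrict X_meas)
  have Bm[measurable]: "B \<in> measurable M T" unfolding B_def T_def
    by (intro measurable_restrict X_meas)
  have Lm[measurable]: "(\<lambda>b. layer_out 0 Wp x0 k b) \<in> borel_measurable T"
    unfolding T_def by (rule Lk_meas)
  have Wm[measurable]: "(\<lambda>a. Wp k a) \<in> borel_measurable S"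
    unfolding S_def by (rule Wp_meas)
  have mv: "(\<lambda>z. Wp k (fst z) *v layer_out 0 Wp x0 k (snd z)) \<in> borel_measurable (S \<Otimes>\<^sub>M T)"
  proof (rule vec_measurable)
    fix i :: 'n
    have "(\<lambda>z. (\<Sum>j\<in>UNIV. Wp k (fst z) $ i $ j * layer_out 0 Wp x0 k (snd z) $ j)) \<in> borel_measurable (S \<Otimes>\<^sub>M T)"
      by measurable
    then show "(\<lambda>z. (Wp k (fst z) *v layer_out 0 Wp x0 k (snd z)) $ i) \<in> borel_measurable (S \<Otimes>\<^sub>M T)"
      by (simp add: matrix_vector_mult_def)
  qed
  have Hm[measurable]: "H \<in> borel_measurable (S \<Otimes>\<^sub>M T)"
    unfolding H_def using mv by measurable
  have WA: "Wp k (A \<omega>) = W k \<omega>" for \<omega>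
    by (simp add: vec_eq_iff A_def KT_def)
  have LB: "layer_out 0 Wp x0 k (B \<omega>) = layer_out 0 W x0 k \<omega>" for \<omega>
    by (rule layer_out_cong) (simp add: vec_eq_iff B_def KF_def)
  interpret SA: prob_space "distr M S A" by (rule prob_space_distr) simp
  interpret TB: prob_space "distr M T B" by (rule prob_space_distr) simp
  interpret ST: pair_sigma_finite "distr M S A" "distr M T B" ..
  have dist_eq: "distr M S A \<Otimes>\<^sub>M distr M T B = distr M (S \<Otimes>\<^sub>M T) (\<lambda>x. (A x, B x))"
    using indep_TF[of k] unfolding indep_var_distribution_eq A_def B_def S_def T_def by blast
  have "(\<integral>\<^sup>+\<omega>. G (layer_out 0 W x0 (Suc k) \<omega>) \<partial>M) = (\<integral>\<^sup>+\<omega>. H (A \<omega>, B \<omega>) \<partial>M)"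
    by (simp only: H_def WA LB layer_Suc fst_conv snd_conv)
  also have "\<dots> = (\<integral>\<^sup>+z. H z \<partial>distr M (S \<Otimes>\<^sub>M T) (\<lambda>x. (A x, B x)))"
    by (rule nn_integral_distr[symmetric]) measurable
  also have "\<dots> = (\<integral>\<^sup>+z. H z \<partial>(distr M S A \<Otimes>\<^sub>M distr M T B))"
    by (simp add: dist_eq)
  also have "\<dots> = (\<integral>\<^sup>+b. (\<integral>\<^sup>+a. H (a, b) \<partial>distr M S A) \<partial>distr M T B)"
    by (rule ST.nn_integral_snd[symmetric]) (simp add: Hm cong: measurable_cong_sets)
  also have "\<dots> = (\<integral>\<^sup>+b. \<Phi> (layer_out 0 Wp x0 k b) \<partial>distr M T B)"
  proof (rule nn_integral_cong)
    fix b assume b: "b \<in> space (distr M T B)"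
    have bT: "b \<in> space T" using b by simp
    have "(\<lambda>a. H (a, b)) \<in> borel_measurable S" by (rule measurable_Pair1[OF Hm bT])
    then have "(\<integral>\<^sup>+a. H (a, b) \<partial>distr M S A) = (\<integral>\<^sup>+\<omega>. H (A \<omega>, b) \<partial>M)"
      by (subst nn_integral_distr) auto
    also have "\<dots> = \<Phi> (layer_out 0 Wp x0 k b)"
      unfolding H_def by (simp add: WA \<Phi>)
    finally show "(\<integral>\<^sup>+a. H (a, b) \<partial>distr M S A) = \<Phi> (layer_out 0 Wp x0 k b)" .
  qed
  also have "\<dots> = (\<integral>\<^sup>+\<omega>. \<Phi> (layer_out 0 Wp x0 k (B \<omega>)) \<partial>M)"
    by (rule nn_integral_distr) measurable
  also have "\<dots> = (\<integral>\<^sup>+\<omega>. \<Phi> (layer_out 0 W x0 k \<omega>) \<partial>M)"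
    by (simp add: LB)
  finally show ?thesis .
qed

end

lemma I0_nonneg: "p > 0 \<Longrightarrow> I0 p d \<ge> 0"
  unfolding I0_def
  by (intro mult_nonneg_nonneg sum_nonneg) (auto intro: gamma_ratio_nonneg)

lemma I0_pos:
  assumes p: "p > 0" and d: "d \<ge> 1"
  shows "I0 p d > 0"
proof -
  have t: "real (d choose n) * (1 / 2 ^ d) * (Gamma (real n / 2 + p / 2) / Gamma (real n / 2)) \<ge> 0" for n
    by (intro mult_nonneg_nonneg) (auto intro: gamma_ratio_nonneg[OF p])
  have "0 < real (d choose d) * (1 / 2 ^ d) * (Gamma (real d / 2 + p / 2) / Gamma (real d / 2))"
    using d p by (auto intro!: mult_pos_pos divide_pos_pos Gamma_real_pos)
  also have "\<dots> \<le> (\<Sum>n=1..d. real (d choose n) * (1 / 2 ^ d) * (Gamma (real n / 2 + p / 2) / Gamma (real n / 2)))"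
    by (rule member_le_sum) (use d t in auto)
  finally show ?thesis unfolding I0_def by simp
qed

context net begin

lemma layer_meas: "(\<lambda>\<omega>. layer_out 0 W x0 k \<omega>) \<in> borel_measurable M"
proof (rule vec_measurable)
  fix j
  show "(\<lambda>\<omega>. layer_out 0 W x0 k \<omega> $ j) \<in> borel_measurable M"
  proof (induction k arbitrary: j)
    case 0
    then show ?case by simp
  next
    case (Suc k)
    have "(\<lambda>\<omega>. prelu 0 (\<Sum>l\<in>UNIV. W k \<omega> $ j $ l * layer_out 0 W x0 k \<omega> $ l)) \<in> borel_measurable M"
      using Suc by measurable
    then show ?case by (simp add: matrix_vector_mult_def)
  qed
qed

lemma moments:
  assumes p: "p > 0"
  shows "(\<integral>\<^sup>+\<omega>. ennreal (norm (layer_out 0 W x0 k \<omega>) powr p) \<partial>M)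
       = ennreal (norm x0 powr p * (\<sigma> powr p * I0 p CARD('n)) ^ k)"
proof (induction k)
  case 0
  then show ?case by (simp add: emeasure_space_1)
next
  case (Suc k)
  define c where "c = \<sigma> powr p * I0 p CARD('n)"
  have c: "c \<ge> 0" unfolding c_def using I0_nonneg[OF p] by simp
  have "(\<integral>\<^sup>+\<omega>. ennreal (norm (layer_out 0 W x0 (Suc k) \<omega>) powr p) \<partial>M)
      = (\<integral>\<^sup>+\<omega>. ennreal (\<sigma> powr p * norm (layer_out 0 W x0 k \<omega>) powr p * I0 p CARD('n)) \<partial>M)"
    by (rule markov[where G = "\<lambda>u. ennreal (norm u powr p)"]) (auto simp: one_layer[OF p])
  also have "\<dots> = (\<integral>\<^sup>+\<omega>. ennreal c * ennreal (norm (layer_out 0 W x0 k \<omega>) powr p) \<partial>M)"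
    using c by (intro nn_integral_cong) (simp add: c_def ennreal_mult[symmetric] mult_ac)
  also have "\<dots> = ennreal c * ennreal (norm x0 powr p * c ^ k)"
    using layer_meas[of x0 k] by (subst nn_integral_cmult) (auto simp: Suc c_def)
  also have "\<dots> = ennreal (norm x0 powr p * c ^ Suc k)"
    using c by (simp add: ennreal_mult[symmetric] mult_ac)
  finally show ?case by (simp add: c_def)
qed

lemma expectation_moments:
  assumes p: "p > 0"
  shows "expectation (\<lambda>\<omega>. norm (layer_out 0 W x0 k \<omega>) powr p)
       = norm x0 powr p * (\<sigma> powr p * I0 p CARD('n)) ^ k"
proof -
  have "expectation (\<lambda>\<omega>. norm (layer_out 0 W x0 k \<omega>) powr p)
      = enn2real (\<integral>\<^sup>+\<omega>. ennreal (norm (layer_out 0 W x0 k \<omega>) powr p) \<partial>M)"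
    using layer_meas[of x0 k] by (intro integral_eq_nn_integral) auto
  also have "\<dots> = norm x0 powr p * (\<sigma> powr p * I0 p CARD('n)) ^ k"
    using I0_nonneg[OF p] by (simp add: moments[OF p])
  finally show ?thesis .
qed

end

theorem mainTheorem1:
  fixes M :: "'w measure" and W :: "nat \<Rightarrow> 'w \<Rightarrow> real^'n^'n"
    and x0 :: "real^'n" and \<sigma> s :: real
  assumes "prob_space M"
    and "\<sigma> > 0" and "s > 0"
    and "prob_space.indep_vars M (\<lambda>_. borel) (\<lambda>(k, i, j) \<omega>. W k \<omega> $ i $ j) UNIV"
    and "\<And>k i j. distributed M lborel (\<lambda>\<omega>. W k \<omega> $ i $ j) (normal_density 0 \<sigma>)"
  shows "(\<forall>k. prob_space.expectation M (\<lambda>\<omega>. norm (layer_out 0 W x0 k \<omega>) powr s)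
              = norm x0 powr s * (\<sigma> powr s * I0 s CARD('n)) ^ k)
     \<and> (x0 \<noteq> 0 \<longrightarrow>
         (\<sigma> = sigma_bar0 s CARD('n) \<longrightarrow>
            (\<forall>k\<ge>1. prob_space.expectation M (\<lambda>\<omega>. norm (layer_out 0 W x0 k \<omega>) powr s)
                      = norm x0 powr s)
          \<and> (\<forall>p>s. \<exists>r>1. \<exists>C>0. \<forall>\<^sub>F k in sequentially.
                 prob_space.expectation M (\<lambda>\<omega>. norm (layer_out 0 W x0 k \<omega>) powr p) \<ge> C * r ^ k))
       \<and> (\<sigma> < sigma_bar0 s CARD('n) \<longrightarrow>
            (\<exists>r. 0 < r \<and> r < 1 \<and> (\<exists>C>0. \<forall>\<^sub>F k in sequentially.
                 prob_space.expectation M (\<lambda>\<omega>. norm (layer_out 0 W x0 k \<omega>) powr s) \<le> C * r ^ k)))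
       \<and> (\<sigma> > sigma_bar0 s CARD('n) \<longrightarrow>
            (\<exists>r>1. \<exists>C>0. \<forall>\<^sub>F k in sequentially.
                 prob_space.expectation M (\<lambda>\<omega>. norm (layer_out 0 W x0 k \<omega>) powr s) \<ge> C * r ^ k)))"
  proof -
  interpret net M W \<sigma> by (rule net.intro[OF assms(1) assms(2) assms(4) assms(5)])
  define d where "d = CARD('n)"
  have d: "d \<ge> 1" unfolding d_def by (simp add: Suc_le_eq)
  have s: "s > 0" by fact
  have E: "\<And>p k. p > 0 \<Longrightarrow> expectation (\<lambda>\<omega>. norm (layer_out 0 W x0 k \<omega>) powr p)
       = norm x0 powr p * (\<sigma> powr p * I0 p d) ^ k"
    unfolding d_def by (rule expectation_moments)
  have I0s: "I0 s d > 0" by (rule I0_pos[OF s d])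
  have sb: "sigma_bar0 s d powr s = 1 / I0 s d"
  proof -
    have "sigma_bar0 s d powr s = I0 s d powr (-1 / s * s)"
      unfolding sigma_bar0_def by (simp add: powr_powr)
    also have "-1 / s * s = -1" using s by simp
    finally show ?thesis using I0s by (simp add: powr_minus_divide)
  qed
  have sbpos: "sigma_bar0 s d > 0" unfolding sigma_bar0_def using I0s by simp
  define r where "r = \<sigma> powr s * I0 s d"
  have part1: "\<forall>k. expectation (\<lambda>\<omega>. norm (layer_out 0 W x0 k \<omega>) powr s) = norm x0 powr s * r ^ k"
    using E[OF s] unfolding r_def by blast
  show ?thesis
  proof (intro conjI impI)
    show "\<forall>k. prob_space.expectation M (\<lambda>\<omega>. norm (layer_out 0 W x0 k \<omega>) powr s)
              = norm x0 powr s * (\<sigma> powr s * I0 s CARD('n)) ^ k"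
      using part1 unfolding r_def d_def by simp
  next
    assume x0: "x0 \<noteq> 0" and eq: "\<sigma> = sigma_bar0 s CARD('n)"
    have r1: "r = 1" unfolding r_def using eq sb I0s by (simp add: d_def)
    show "\<forall>k\<ge>1. prob_space.expectation M (\<lambda>\<omega>. norm (layer_out 0 W x0 k \<omega>) powr s) = norm x0 powr s"
      using part1 r1 by simp
  next
    assume x0: "x0 \<noteq> 0" and eq: "\<sigma> = sigma_bar0 s CARD('n)"
    have r1: "r = 1" unfolding r_def using eq sb I0s by (simp add: d_def)
    show "\<forall>p>s. \<exists>r>1. \<exists>C>0. \<forall>\<^sub>F k in sequentially.
                 prob_space.expectation M (\<lambda>\<omega>. norm (layer_out 0 W x0 k \<omega>) powr p) \<ge> C * r ^ k"
    proof (intro allI impI)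
      fix p assume sp: "p > s"
      have p: "p > 0" using s sp by linarith
      define rp where "rp = \<sigma> powr p * I0 p d"
      have ineq: "r \<le> (s/p) * rp + (1 - s/p) * (1 - 1 / 2 ^ d)"
        unfolding r_def rp_def by (rule I0_ineq[OF s sp \<sigma>])
      have rp1: "rp > 1"
      proof (rule ccontr)
        assume "\<not> rp > 1"
        then have "rp \<le> 1" by simp
        moreover have "s / p > 0" "1 - s/p > 0" using s sp p by (auto simp: field_simps)
        moreover have "(1::real) / 2 ^ d > 0" by simp
        ultimately have "(s/p) * rp + (1 - s/p) * (1 - 1 / 2 ^ d) < (s/p) * 1 + (1 - s/p) * 1"
          by (intro add_le_less_mono mult_left_mono mult_strict_left_mono) auto
        then show False using ineq r1 by simp
      qed
      have C: "norm x0 powr p > 0" using x0 by simp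
      show "\<exists>r>1. \<exists>C>0. \<forall>\<^sub>F k in sequentially.
                 prob_space.expectation M (\<lambda>\<omega>. norm (layer_out 0 W x0 k \<omega>) powr p) \<ge> C * r ^ k"
      proof -
        have ev: "\<forall>\<^sub>F k in sequentially. expectation (\<lambda>\<omega>. norm (layer_out 0 W x0 k \<omega>) powr p) \<ge> norm x0 powr p * rp ^ k"
          using E[OF p] unfolding rp_def by simp
        show ?thesis using rp1 C ev by blast
      qed
    qed
  next
    assume x0: "x0 \<noteq> 0" and lt: "\<sigma> < sigma_bar0 s CARD('n)"
    have "\<sigma> powr s < sigma_bar0 s d powr s"
      using lt \<sigma> s unfolding d_def by (intro powr_less_mono2) auto
    then have "r < 1" unfolding r_def using sb I0s by (simp add: field_simps)
    moreover have "r > 0" unfolding r_def using I0s \<sigma> by simp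
    moreover have C: "norm x0 powr s > 0" using x0 by simp
    ultimately show "\<exists>r. 0 < r \<and> r < 1 \<and> (\<exists>C>0. \<forall>\<^sub>F k in sequentially.
                 prob_space.expectation M (\<lambda>\<omega>. norm (layer_out 0 W x0 k \<omega>) powr s) \<le> C * r ^ k)"
      using part1 by (intro exI[of _ r] conjI exI[of _ "norm x0 powr s"]) auto
  next
    assume x0: "x0 \<noteq> 0" and gt: "\<sigma> > sigma_bar0 s CARD('n)"
    have "sigma_bar0 s d powr s < \<sigma> powr s"
      using gt sbpos s unfolding d_def by (intro powr_less_mono2) auto
    then have "r > 1" unfolding r_def using sb I0s by (simp add: field_simps)
    moreover have C: "norm x0 powr s > 0" using x0 by simp
    ultimately show "\<exists>r>1. \<exists>C>0. \<forall>\<^sub>F k in sequentially.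
                 prob_space.expectation M (\<lambda>\<omega>. norm (layer_out 0 W x0 k \<omega>) powr s) \<ge> C * r ^ k"
      using part1 by (intro exI[of _ r] conjI exI[of _ "norm x0 powr s"]) auto
  qed
qed

end
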